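(* Let $\alpha\in[0,\infty)^n$ be non-increasing and let $f\colon\mathcal{B}_n\to\mathcal{H}_d$ satisfy $\|f(x)-f(y)\|\le d_\alpha(x,y)$ for all $x,y$. Let $X$ be a $k$-homogeneous $\mathcal{B}_n$-valued random vector satisfying the stochastic covering property. Define random variables $Y_1,\dots,Y_k$ by: conditionally on $X$, $Y_1$ is uniform on $\mathrm{supp}\,X\setminus\{1,\dots,k\}$, and for $l=2,\dots,k$, conditionally on $X,Y_1,\dots,Y_{l-1}$, $Y_l$ is uniform on $\mathrm{supp}\,X\setminus(\{1,\dots,k\}\cup\{Y_1,\dots,Y_{l-1}\})$, where $\mathrm{supp}\,X=\{i:X_i=1\}$ and the uniform distribution on the empty set is the Dirac mass at $0$. Let $\mathcal{G}_0$ be trivial, $\mathcal{G}_l=\sigma(X_1,\dots,X_l)$ for $l\in[k]$ and $\mathcal{G}_{k+r}=\sigma(X_1,\dots,X_k,Y_1,\dots,Y_r)$ for $r\in[k]$, and $N_l=\mathbb{E}[f(X)\mid\mathcal{G}_l]-\mathbb{E}[f(X)\mid\mathcal{G}_{l-1}]$ for $l\in[2k]$. Then $N_l^2\preccurlyeq4\alpha_l^2I_d$ for $l\in[k]$, and $N_l^2\preccurlyeq4\alpha_k^2I_d$ for $l=k+1,\dots,2k$.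
   Context: $\mathcal{B}_n=\{0,1\}^n$, $\mathcal{H}_d$ the $d\times d$ Hermitian matrices, $\|\cdot\|$ operator norm, $\preccurlyeq$ positive semidefinite order, $I_d$ identity. $d_\alpha(x,y)=\sum_i\alpha_i\mathbf{1}\{x_i\ne y_i\}$. $X$ is $k$-homogeneous if a.s. exactly $k$ of its coordinates equal $1$. For $S\subset[n]$, $x_S=(x_i)_{i\in S}$; $x\triangleright y$ means $x=y$ or $x=y+e_i$. $X$ satisfies the stochastic covering property if for every $S\subset[n]$ and $x,y$ with $x_S\triangleright y_S$ there is a coupling $(U,V)$ of $\mathcal{L}(X_{S^c}\mid X_S=y_S)$ and $\mathcal{L}(X_{S^c}\mid X_S=x_S)$ with $U\triangleright V$ a.s. *)

theory Defs
  imports "HOL-Analysis.Analysis" "HOL-Probability.Probability"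
begin

text \<open>Points of B_n are encoded as subsets of {1..n}: x_i = 1 iff i is in the set.
  Restriction x_S is encoded as x \<inter> S (coordinates in S).\<close>

definition dist_alpha :: "nat \<Rightarrow> (nat \<Rightarrow> real) \<Rightarrow> nat set \<Rightarrow> nat set \<Rightarrow> real" where
  "dist_alpha n \<alpha> x y = (\<Sum>i\<in>{1..n}. \<alpha> i * (if (i \<in> x) \<noteq> (i \<in> y) then 1 else 0))"

definition hermitian_mat :: "complex^'d^'d \<Rightarrow> bool" where
  "hermitian_mat A \<longleftrightarrow> (\<forall>i j. A $ i $ j = cnj (A $ j $ i))"

text \<open>Positive semidefinite (complex quadratic form v^* M v real and nonnegative for all v).\<close>
definition psd_mat :: "complex^'d^'d \<Rightarrow> bool" where
  "psd_mat M \<longleftrightarrow> (\<forall>v::complex^'d. let q = (\<Sum>i\<in>UNIV. cnj (v $ i) * (M *v v) $ i)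
                      in Im q = 0 \<and> 0 \<le> Re q)"

definition psd_le :: "complex^'d^'d \<Rightarrow> complex^'d^'d \<Rightarrow> bool" where
  "psd_le A B \<longleftrightarrow> psd_mat (B - A)"

definition op_norm :: "complex^'d^'d \<Rightarrow> real" where
  "op_norm A = onorm (\<lambda>v::complex^'d. A *v v)"

text \<open>x \<triangleright> y for 0/1-vectors with coordinate set I: x = y or x = y + e_i, i in I.\<close>
definition covers :: "nat set \<Rightarrow> nat set \<Rightarrow> nat set \<Rightarrow> bool" where
  "covers I x y \<longleftrightarrow> x = y \<or> (\<exists>i\<in>I. i \<notin> y \<and> x = insert i y)"

text \<open>Law of X_{S^c} given X_S = z (z a subset of S).\<close>
definition cond_law_compl :: "nat set pmf \<Rightarrow> nat set \<Rightarrow> nat set \<Rightarrow> nat set pmf" where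
  "cond_law_compl X S z = map_pmf (\<lambda>A. A - S) (cond_pmf X {A. A \<inter> S = z})"

definition stoch_covering :: "nat \<Rightarrow> nat set pmf \<Rightarrow> bool" where
  "stoch_covering n X \<longleftrightarrow>
    (\<forall>S x y. S \<subseteq> {1..n} \<and> x \<subseteq> {1..n} \<and> y \<subseteq> {1..n} \<and> covers S (x \<inter> S) (y \<inter> S)
       \<and> set_pmf X \<inter> {A. A \<inter> S = x \<inter> S} \<noteq> {} \<and> set_pmf X \<inter> {A. A \<inter> S = y \<inter> S} \<noteq> {}
     \<longrightarrow> (\<exists>c :: (nat set \<times> nat set) pmf.
            map_pmf fst c = cond_law_compl X S (y \<inter> S) \<and>
            map_pmf snd c = cond_law_compl X S (x \<inter> S) \<and>
            (\<forall>(u, v)\<in>set_pmf c. covers ({1..n} - S) u v)))"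

text \<open>Uniform distribution on a finite set; Dirac mass at 0 on the empty set.\<close>
definition unif0 :: "nat set \<Rightarrow> nat pmf" where
  "unif0 S = (if S = {} then return_pmf 0 else pmf_of_set S)"

text \<open>Conditional law of (Y_1,...,Y_l) given X = A.\<close>
fun Ys :: "nat \<Rightarrow> nat set \<Rightarrow> nat \<Rightarrow> nat list pmf" where
  "Ys k A 0 = return_pmf []"
| "Ys k A (Suc l) = bind_pmf (Ys k A l)
     (\<lambda>ys. map_pmf (\<lambda>y. ys @ [y]) (unif0 (A - ({1..k} \<union> set ys))))"

text \<open>Joint law of (X, (Y_1,...,Y_k)).\<close>
definition joint :: "nat \<Rightarrow> nat set pmf \<Rightarrow> (nat set \<times> nat list) pmf" where
  "joint k X = bind_pmf X (\<lambda>A. map_pmf (\<lambda>ys. (A, ys)) (Ys k A k))"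

text \<open>Generator of G_l: G_0 trivial, G_l = sigma(X_1..X_l) for l \<le> k,
  G_{k+r} = sigma(X_1..X_k, Y_1..Y_r).\<close>
definition gen :: "nat \<Rightarrow> nat \<Rightarrow> nat set \<times> nat list \<Rightarrow> nat set \<times> nat list" where
  "gen k l \<omega> = (fst \<omega> \<inter> {1..min l k}, take (l - k) (snd \<omega>))"

text \<open>Conditional expectation given sigma(g) on a discrete space, evaluated at outcome \<omega>.\<close>
definition cond_exp_pmf :: "'a pmf \<Rightarrow> ('a \<Rightarrow> 'b) \<Rightarrow> ('a \<Rightarrow> 'c::{banach,second_countable_topology}) \<Rightarrow> 'a \<Rightarrow> 'c" where
  "cond_exp_pmf p g Z \<omega> = measure_pmf.expectation (cond_pmf p {\<omega>'. g \<omega>' = g \<omega>}) Z"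

definition mart_diff :: "(nat set \<Rightarrow> complex^'d^'d) \<Rightarrow> nat \<Rightarrow> nat set pmf \<Rightarrow> nat \<Rightarrow> nat set \<times> nat list \<Rightarrow> complex^'d^'d" where
  "mart_diff f k X l \<omega> =
     cond_exp_pmf (joint k X) (gen k l) (\<lambda>\<omega>'. f (fst \<omega>')) \<omega>
   - cond_exp_pmf (joint k X) (gen k (l - 1)) (\<lambda>\<omega>'. f (fst \<omega>')) \<omega>"

end

theory Submission
  imports Defs
begin


definition mbound :: "complex^'d^'d \<Rightarrow> real \<Rightarrow> bool" where
  "mbound M b \<longleftrightarrow> (\<forall>v. norm (M *v v) \<le> b * norm v)"

lemma herm_inner:
  fixes N :: "complex^'d^'d"
  assumes "hermitian_mat N"
  shows "(\<Sum>i\<in>UNIV. cnj (v $ i) * (N *v w) $ i) = (\<Sum>j\<in>UNIV. cnj ((N *v v) $ j) * w $ j)"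
proof -
  have h: "\<And>i j. cnj (N $ j $ i) = N $ i $ j" using assms unfolding hermitian_mat_def
    by (metis complex_cnj_cnj)
  have "(\<Sum>i\<in>UNIV. cnj (v $ i) * (N *v w) $ i) = (\<Sum>i\<in>UNIV. \<Sum>j\<in>UNIV. cnj (v $ i) * N $ i $ j * w $ j)"
    by (simp add: matrix_vector_mult_def sum_distrib_left mult.assoc)
  also have "\<dots> = (\<Sum>j\<in>UNIV. \<Sum>i\<in>UNIV. cnj (v $ i) * N $ i $ j * w $ j)"
    by (rule sum.swap)
  also have "\<dots> = (\<Sum>j\<in>UNIV. cnj ((N *v v) $ j) * w $ j)"
    by (simp add: matrix_vector_mult_def sum_distrib_right sum_distrib_left h mult.commute mult.left_commute)
  finally show ?thesis .
qed

lemma norm_vec_sq: "(norm (x::complex^'d))^2 = (\<Sum>i\<in>UNIV. (norm (x $ i))^2)"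
  by (simp add: norm_vec_def L2_set_def sum_nonneg)

lemma scaled_id_mult: "((c::real) *\<^sub>R mat 1) *v (v::complex^'d) = c *\<^sub>R v"
proof -
  have "\<And>i. (\<Sum>j\<in>UNIV. (if i = j then c *\<^sub>R 1 else 0) * v $ j) = c *\<^sub>R v $ i"
  proof -
    fix i
    have "(\<Sum>j\<in>UNIV. (if i = j then c *\<^sub>R 1 else 0) * v $ j) = (\<Sum>j\<in>UNIV. if i = j then (c *\<^sub>R 1) * v $ j else 0)"
      by (rule sum.cong) auto
    also have "\<dots> = c *\<^sub>R v $ i" by simp
    finally show "(\<Sum>j\<in>UNIV. (if i = j then c *\<^sub>R 1 else 0) * v $ j) = c *\<^sub>R v $ i" .
  qed
  moreover have "\<And>i j. ((c *\<^sub>R mat 1)::complex^'d^'d) $ i $ j = (if i = j then c *\<^sub>R 1 else 0)"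
    by (simp add: mat_def)
  ultimately show ?thesis unfolding vec_eq_iff matrix_vector_mult_def by (simp only: vec_lambda_beta) simp

qed

lemma psd_from_mbound:
  fixes N :: "complex^'d^'d"
  assumes "hermitian_mat N" "mbound N b" "0 \<le> b"
  shows "psd_le (N ** N) ((b^2) *\<^sub>R mat 1)"
  unfolding psd_le_def psd_mat_def Let_def
proof
  fix v :: "complex^'d"
  define w where "w = N *v v"
  have e: "((b^2) *\<^sub>R mat 1 - N ** N) *v v = (b^2) *\<^sub>R v - N *v w"
    by (simp add: w_def matrix_vector_mult_diff_rdistrib scaled_id_mult matrix_vector_mul_assoc)
  have "(\<Sum>i\<in>UNIV. cnj (v $ i) * (((b^2) *\<^sub>R mat 1 - N ** N) *v v) $ i)
      = (\<Sum>i\<in>UNIV. of_real (b^2) * (cnj (v $ i) * v $ i)) - (\<Sum>i\<in>UNIV. cnj (v $ i) * (N *v w) $ i)"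
  proof -
    have comp: "\<And>i. (((b^2) *\<^sub>R mat 1 - N ** N) *v v) $ i = of_real (b^2) * v$i - (N *v w)$i"
      unfolding e vector_minus_component vector_scaleR_component by (simp add: scaleR_conv_of_real)
    show ?thesis by (simp only: comp) (simp add: sum_subtractf right_diff_distrib mult.left_commute)
  qed
  also have "\<dots> = of_real (b^2) * (\<Sum>i\<in>UNIV. of_real ((norm (v $ i))^2)) - (\<Sum>j\<in>UNIV. of_real ((norm (w $ j))^2))"
    by (simp add: herm_inner[OF assms(1)] w_def[symmetric] complex_norm_square[symmetric] mult.commute sum_distrib_left del: of_real_power)
  also have "\<dots> = of_real (b^2 * (norm v)^2 - (norm w)^2)"
    by (simp add: norm_vec_sq)
  finally have q: "(\<Sum>i\<in>UNIV. cnj (v $ i) * (((b^2) *\<^sub>R mat 1 - N ** N) *v v) $ i) = of_real (b^2 * (norm v)^2 - (norm w)^2)" .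
  have "norm w \<le> b * norm v" using assms(2) unfolding mbound_def w_def by blast
  hence "(norm w)^2 \<le> (b * norm v)^2" by (simp add: power_mono)
  thus "Im (\<Sum>i\<in>UNIV. cnj (v $ i) * (((b^2) *\<^sub>R mat 1 - N ** N) *v v) $ i) = 0 \<and>
         0 \<le> Re (\<Sum>i\<in>UNIV. cnj (v $ i) * (((b^2) *\<^sub>R mat 1 - N ** N) *v v) $ i)"
    unfolding q by (simp add: power_mult_distrib)
qed



lemma pmf_bind_inj:
  assumes inj: "\<And>x y x' y'. h x y = h x' y' \<Longrightarrow> x = x' \<and> y = y'"
  shows "pmf (bind_pmf M (\<lambda>x. map_pmf (h x) (U x))) (h x0 y0) = pmf M x0 * pmf (U x0) y0"
proof -
  have "\<And>x. pmf (map_pmf (h x) (U x)) (h x0 y0) = indicator {x0} x * pmf (U x0) y0"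
  proof -
    fix x
    show "pmf (map_pmf (h x) (U x)) (h x0 y0) = indicator {x0} x * pmf (U x0) y0"
    proof (cases "x = x0")
      case True
      have "inj (h x0)" using inj by (auto intro: injI)
      then show ?thesis using True by (simp add: pmf_map_inj')
    next
      case False
      have "h x0 y0 \<notin> h x ` set_pmf (U x)" using inj False by blast
      then show ?thesis using False by (simp add: pmf_map_outside)
    qed
  qed
  hence "pmf (bind_pmf M (\<lambda>x. map_pmf (h x) (U x))) (h x0 y0) = (\<integral>x. indicator {x0} x * pmf (U x0) y0 \<partial>measure_pmf M)"
    by (simp add: pmf_bind)
  also have "\<dots> = pmf M x0 * pmf (U x0) y0"
    by (simp add: measure_pmf_single)
  finally show ?thesis .
qed

lemma Ys_len: "ys \<in> set_pmf (Ys k A r) \<Longrightarrow> length ys = r"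
  by (induction r arbitrary: ys) auto

lemma Ys_step: "pmf (Ys k A (Suc r)) (ys @ [y]) = pmf (Ys k A r) ys * pmf (unif0 (A - ({1..k} \<union> set ys))) y"
  unfolding Ys.simps by (rule pmf_bind_inj[where h="\<lambda>ys y. ys @ [y]"]) simp

lemma set_unif0: "finite S \<Longrightarrow> set_pmf (unif0 S) = (if S = {} then {0} else S)"
  by (simp add: unif0_def)

lemma pmf_unif0: "finite S \<Longrightarrow> S \<noteq> {} \<Longrightarrow> pmf (unif0 S) y = indicator S y / card S"
  by (simp add: unif0_def pmf_of_set)

lemma Ys_supp:
  "finite A \<Longrightarrow> ys \<in> set_pmf (Ys k A r) \<Longrightarrow>
    (\<forall>y\<in>set ys. y = 0 \<or> (y \<in> A \<and> y \<notin> {1..k})) \<and> card (A - ({1..k} \<union> set ys)) = card (A - {1..k}) - r"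
proof (induction r arbitrary: ys)
  case 0
  then show ?case by simp
next
  case (Suc r)
  from Suc.prems obtain ys' y where ys: "ys = ys' @ [y]" and ys': "ys' \<in> set_pmf (Ys k A r)"
    and y: "y \<in> set_pmf (unif0 (A - ({1..k} \<union> set ys')))" by auto
  note IH = Suc.IH[OF Suc.prems(1) ys']
  define R where "R = A - ({1..k} \<union> set ys')"
  have fR: "finite R" using Suc.prems(1) by (simp add: R_def)
  have yR0: "y \<in> set_pmf (unif0 R)" using y by (simp only: R_def)
  show ?case
  proof (cases "R = {}")
    case True
    then have "y = 0" using yR0 fR by (simp add: set_unif0)
    have E: "A - ({1..k} \<union> set ys) = {}" using True by (auto simp: ys R_def)
    have c2: "card (A - {1..k}) - r = 0" using IH True by (metis card.empty R_def)
    have c1: "card (A - ({1..k} \<union> set ys)) = card (A - {1..k}) - Suc r"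
      unfolding E card.empty using c2 by arith
    show ?thesis using IH \<open>y = 0\<close> c1 by (auto simp: ys)
  next
    case False
    then have yR: "y \<in> R" using yR0 fR by (simp add: set_unif0)
    have "A - ({1..k} \<union> set ys) = R - {y}" by (auto simp: ys R_def)
    then have "card (A - ({1..k} \<union> set ys)) = card R - 1" using yR fR by simp
    then show ?thesis using IH yR by (auto simp: ys R_def)
  qed
qed

lemma Ys_take: "ys \<in> set_pmf (Ys k A l) \<Longrightarrow> r \<le> l \<Longrightarrow> take r ys \<in> set_pmf (Ys k A r)"
proof (induction l arbitrary: ys)
  case 0
  then show ?case by simp
next
  case (Suc l)
  from Suc.prems obtain ys' y where ys: "ys = ys' @ [y]" and ys': "ys' \<in> set_pmf (Ys k A l)" by auto
  have len: "length ys' = l" using Ys_len[OF ys'] .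
  show ?case
  proof (cases "r = Suc l")
    case True
    then show ?thesis using Suc.prems len by (simp add: ys)
  next
    case False
    then have "r \<le> l" using Suc.prems by simp
    then have "take r ys = take r ys'" using len by (simp add: ys)
    then show ?thesis using Suc.IH[OF ys' \<open>r \<le> l\<close>] by simp
  qed
qed

lemma Ys_map_take: "r \<le> l \<Longrightarrow> map_pmf (take r) (Ys k A l) = Ys k A r"
proof (induction l)
  case 0
  then show ?case by simp
next
  case (Suc l)
  show ?case
  proof (cases "r = Suc l")
    case True
    have "map_pmf (take r) (Ys k A (Suc l)) = map_pmf id (Ys k A (Suc l))"
      by (rule map_pmf_cong) (auto simp: True dest: Ys_len)
    then show ?thesis using True by simp
  next
    case False
    then have rl: "r \<le> l" using Suc.prems by simp
    have "map_pmf (take r) (Ys k A (Suc l)) =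
      bind_pmf (Ys k A l) (\<lambda>ys. map_pmf (take r) (map_pmf (\<lambda>y. ys @ [y]) (unif0 (A - ({1..k} \<union> set ys)))))"
      by (simp add: map_bind_pmf)
    also have "\<dots> = bind_pmf (Ys k A l) (\<lambda>ys. return_pmf (take r ys))"
    proof (rule bind_pmf_cong)
      fix ys assume "ys \<in> set_pmf (Ys k A l)"
      then have "length ys = l" by (rule Ys_len)
      then have "\<And>y. take r (ys @ [y]) = take r ys" using rl by simp
      then show "map_pmf (take r) (map_pmf (\<lambda>y. ys @ [y]) (unif0 (A - ({1..k} \<union> set ys)))) = return_pmf (take r ys)"
        by (simp add: pmf.map_comp o_def)
    qed simp
    also have "\<dots> = map_pmf (take r) (Ys k A l)" by (simp add: map_pmf_def)
    also have "\<dots> = Ys k A r" using Suc.IH[OF rl] .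
    finally show ?thesis .
  qed
qed

lemma Ys_pmf_form:
  assumes fA: "finite A" and fA0: "finite A0" and z0: "0 \<notin> A0"
    and cardeq: "card (A - {1..k}) = card (A0 - {1..k})"
    and ys0: "ys0 \<in> set_pmf (Ys k A0 l)"
  shows "r \<le> l \<Longrightarrow> pmf (Ys k A r) (take r ys0) =
      pmf (Ys k A0 r) (take r ys0) * (if set (take r ys0) - {0} \<subseteq> A then 1 else 0)"
proof (induction r)
  case 0
  then show ?case by simp
next
  case (Suc r)
  have len: "length ys0 = l" using Ys_len[OF ys0] .
  define t where "t = take r ys0"
  define y where "y = ys0 ! r"
  have tt: "take (Suc r) ys0 = t @ [y]" using Suc.prems len by (simp add: t_def y_def take_Suc_conv_app_nth)
  have mem: "t @ [y] \<in> set_pmf (Ys k A0 (Suc r))" using Ys_take[OF ys0 Suc.prems] tt by simp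
  define R0 where "R0 = A0 - ({1..k} \<union> set t)"
  define RA where "RA = A - ({1..k} \<union> set t)"
  have fR: "finite R0" "finite RA" using fA fA0 by (auto simp: R0_def RA_def)
  have p0: "pmf (Ys k A0 (Suc r)) (t @ [y]) > 0" using mem by (simp add: pmf_positive)
  hence tpos: "pmf (Ys k A0 r) t > 0" and ypos: "pmf (unif0 R0) y > 0"
    unfolding Ys_step R0_def by (auto simp: zero_less_mult_iff pmf_nonneg order.strict_iff_order)
  have ymem: "y \<in> set_pmf (unif0 R0)" using ypos by (simp add: set_pmf_iff)
  have IH: "pmf (Ys k A r) t = pmf (Ys k A0 r) t * (if set t - {0} \<subseteq> A then 1 else 0)"
    using Suc.IH Suc.prems by (simp add: t_def)
  show ?case
  proof (cases "set t - {0} \<subseteq> A")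
    case False
    then have "\<not> set (t @ [y]) - {0} \<subseteq> A" by auto
    then show ?thesis using False by (simp only: tt Ys_step IH) simp
  next
    case True
    then have "pmf (Ys k A r) t > 0" using IH tpos by simp
    then have "t \<in> set_pmf (Ys k A r)" by (simp add: set_pmf_iff)
    from Ys_supp[OF fA this] have cA: "card RA = card (A - {1..k}) - r" by (simp add: RA_def)
    have "t \<in> set_pmf (Ys k A0 r)" using tpos by (simp add: set_pmf_iff)
    from Ys_supp[OF fA0 this] have c0: "card R0 = card (A0 - {1..k}) - r" by (simp add: R0_def)
    have cc: "card RA = card R0" using cA c0 cardeq by simp
    have key: "pmf (unif0 RA) y = pmf (unif0 R0) y * (if y = 0 \<or> y \<in> A then 1 else 0)"
    proof (cases "R0 = {}")
      case True
      then have "RA = {}" using cc fR by simp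
      moreover have "y = 0" using ymem True fR by (simp add: set_unif0)
      ultimately show ?thesis using True by (simp add: unif0_def)
    next
      case False
      then have "RA \<noteq> {}" using cc fR by auto
      have yR: "y \<in> R0" using ymem False fR by (simp add: set_unif0)
      then have "y \<noteq> 0" using z0 by (metis DiffD1 R0_def)
      have "y \<in> RA \<longleftrightarrow> y \<in> A" using yR by (auto simp: R0_def RA_def)
      then show ?thesis using False \<open>RA \<noteq> {}\<close> fR yR cc \<open>y \<noteq> 0\<close>
        by (simp add: pmf_unif0 indicator_def)
    qed
    have "set (t @ [y]) - {0} \<subseteq> A \<longleftrightarrow> (y = 0 \<or> y \<in> A)" using True by auto
    then show ?thesis using True
      by (simp only: tt Ys_step IH key[unfolded RA_def R0_def]) simp
  qed
qed



lemma pmf_eq_scale: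
  assumes "\<And>x. pmf M x = c * pmf N x" "0 \<le> c"
  shows "M = N"
proof -
  have "emeasure (measure_pmf M) UNIV = (\<integral>\<^sup>+ x. ennreal (pmf M x) \<partial>count_space UNIV)"
    by (simp add: nn_integral_pmf)
  also have "\<dots> = (\<integral>\<^sup>+ x. ennreal c * ennreal (pmf N x) \<partial>count_space UNIV)"
    using assms by (simp add: ennreal_mult)
  also have "\<dots> = ennreal c * (\<integral>\<^sup>+ x. ennreal (pmf N x) \<partial>count_space UNIV)"
    by (simp add: nn_integral_cmult)
  also have "\<dots> = ennreal c * emeasure (measure_pmf N) UNIV"
    by (simp add: nn_integral_pmf)
  finally have "ennreal c = 1" by simp
  hence "c = 1" using assms(2) by (simp add: ennreal_eq_1)
  thus ?thesis using assms(1) by (intro pmf_eqI) simp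
qed

lemma cond_joint:
  fixes p :: "'a pmf" and K :: "'a \<Rightarrow> 'b pmf"
  assumes A0: "A0 \<in> set_pmf p" "P A0" "y0 \<in> set_pmf (K A0)"
    and form: "\<forall>A\<in>set_pmf p. P A \<longrightarrow> pmf (K A) y0 = C * (if Q A then 1 else 0)"
  shows "map_pmf fst (cond_pmf (bind_pmf p (\<lambda>A. map_pmf (\<lambda>y. (A, y)) (K A))) {w. P (fst w) \<and> snd w = y0})
         = cond_pmf p {A. P A \<and> Q A}"
proof -
  define J where "J = bind_pmf p (\<lambda>A. map_pmf (\<lambda>y. (A, y)) (K A))"
  define E where "E = {w. P (fst w) \<and> snd w = y0}"
  define PQ where "PQ = {A. P A \<and> Q A}"
  have pJ: "\<And>A y. pmf J (A, y) = pmf p A * pmf (K A) y"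
    unfolding J_def by (rule pmf_bind_inj[where h="\<lambda>A y. (A, y)"]) simp
  have pos: "pmf (K A0) y0 > 0" using A0(3) by (simp add: pmf_positive)
  hence Cpos: "C > 0" and QA0: "Q A0" using form A0(1,2)
    by (auto split: if_splits)
  have J0: "(A0, y0) \<in> set_pmf J" using A0 pos by (simp add: set_pmf_iff pJ pmf_positive)
  hence JE: "set_pmf J \<inter> E \<noteq> {}" using A0 by (auto simp: E_def)
  have pPQ: "set_pmf p \<inter> PQ \<noteq> {}" using A0 QA0 by (auto simp: PQ_def)
  have mJE: "measure J E > 0" using J0 A0 by (intro measure_pmf_posI) (auto simp: E_def)
  have mPQ: "measure p PQ > 0" using A0 QA0 by (intro measure_pmf_posI) (auto simp: PQ_def)
  have inj: "inj (\<lambda>A. (A, y0))" by (auto intro: injI)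
  have eq: "cond_pmf J E = map_pmf (\<lambda>A. (A, y0)) (cond_pmf p PQ)"
  proof (rule pmf_eq_scale)
    show "0 \<le> C * measure p PQ / measure J E" using Cpos mPQ mJE by simp
    fix w :: "'a \<times> 'b"
    obtain A y where w: "w = (A, y)" by (cases w)
    have r: "pmf (map_pmf (\<lambda>A. (A, y0)) (cond_pmf p PQ)) (A, y) = (if y = y0 then pmf (cond_pmf p PQ) A else 0)"
    proof (cases "y = y0")
      case True then show ?thesis using pmf_map_inj'[OF inj] by simp
    next
      case False then show ?thesis by (auto intro!: pmf_map_outside)
    qed
    show "pmf (cond_pmf J E) w = C * measure p PQ / measure J E * pmf (map_pmf (\<lambda>A. (A, y0)) (cond_pmf p PQ)) w"
    proof (cases "y = y0 \<and> P A \<and> A \<in> set_pmf p")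
      case True
      then have K: "pmf (K A) y0 = C * (if Q A then 1 else 0)" using form by blast
      have yy: "y = y0" using True by simp
      have wE: "(A, y0) \<in> E" using True by (simp add: E_def)
      have r0: "pmf (map_pmf (\<lambda>A. (A, y0)) (cond_pmf p PQ)) (A, y0) = pmf (cond_pmf p PQ) A"
        using r yy by simp
      have PQi: "A \<in> PQ \<longleftrightarrow> Q A" using True by (simp add: PQ_def)
      have l: "pmf (cond_pmf J E) (A, y0) = pmf p A * pmf (K A) y0 / measure J E"
        by (simp add: pmf_cond[OF JE] wE pJ)
      show ?thesis unfolding w yy r0 l using mPQ mJE K
        by (cases "Q A") (simp_all add: pmf_cond[OF pPQ] PQi)
    next
      case False
      have "w \<notin> set_pmf (cond_pmf J E)"
        unfolding set_cond_pmf[OF JE] using False by (auto simp: w E_def J_def)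
      hence "pmf (cond_pmf J E) w = 0" by (simp add: pmf_eq_0_set_pmf)
      moreover have "A \<in> set_pmf (cond_pmf p PQ) \<Longrightarrow> P A \<and> A \<in> set_pmf p"
        unfolding set_cond_pmf[OF pPQ] by (auto simp: PQ_def)
      hence "pmf (map_pmf (\<lambda>A. (A, y0)) (cond_pmf p PQ)) w = 0"
        using False by (auto simp: w r pmf_eq_0_set_pmf)
      ultimately show ?thesis by simp
    qed
  qed
  have "map_pmf fst (cond_pmf J E) = cond_pmf p PQ"
    unfolding eq by (simp add: pmf.map_comp o_def)
  thus ?thesis by (simp add: J_def E_def PQ_def)
qed



lemma mbound_zero: "0 \<le> b \<Longrightarrow> mbound 0 b"
  by (simp add: mbound_def)

lemma mbound_add: "mbound M b1 \<Longrightarrow> mbound N b2 \<Longrightarrow> mbound (M + N) (b1 + b2)"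
  unfolding mbound_def
proof (intro allI)
  fix v
  assume h1: "\<forall>v. norm (M *v v) \<le> b1 * norm v" and h2: "\<forall>v. norm (N *v v) \<le> b2 * norm v"
  have "norm ((M + N) *v v) = norm (M *v v + N *v v)" by (simp add: matrix_vector_mult_add_rdistrib)
  also have "\<dots> \<le> norm (M *v v) + norm (N *v v)" by (rule norm_triangle_ineq)
  also have "\<dots> \<le> b1 * norm v + b2 * norm v" using h1 h2 by (meson add_mono)
  finally show "norm ((M + N) *v v) \<le> (b1 + b2) * norm v" by (simp add: distrib_right)
qed

lemma matrix_scaleR_mult: "((c::real) *\<^sub>R (M::complex^'d^'d)) *v v = c *\<^sub>R (M *v v)"
  by (simp add: vec_eq_iff matrix_vector_mult_def scaleR_sum_right)

lemma mbound_scale: "0 \<le> c \<Longrightarrow> mbound M b \<Longrightarrow> mbound (c *\<^sub>R M) (c * b)"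
  unfolding mbound_def matrix_scaleR_mult
  by (simp add: mult.assoc mult_left_mono)

lemma mbound_swap: "mbound (M - N) b \<Longrightarrow> mbound (N - M) b"
  unfolding mbound_def
proof (intro allI)
  fix v
  assume h: "\<forall>v. norm ((M - N) *v v) \<le> b * norm v"
  have "(N - M) *v v = - ((M - N) *v v)" by (simp add: matrix_vector_mult_diff_rdistrib)
  then show "norm ((N - M) *v v) \<le> b * norm v" using h by simp
qed

lemma mbound_sum:
  assumes "finite W" "\<forall>w\<in>W. 0 \<le> p w" "\<forall>w\<in>W. mbound (D w) b"
  shows "mbound (\<Sum>w\<in>W. p w *\<^sub>R D w) ((\<Sum>w\<in>W. p w) * b)"
  using assms
proof (induction W rule: finite_induct)
  case empty
  then show ?case by (simp add: mbound_def)
next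
  case (insert x F)
  then have "mbound (p x *\<^sub>R D x + (\<Sum>w\<in>F. p w *\<^sub>R D w)) (p x * b + (\<Sum>w\<in>F. p w) * b)"
    by (intro mbound_add mbound_scale) auto
  then show ?case using insert by (simp add: distrib_right)
qed

lemma mbound_op:
  fixes M :: "complex^'d^'d"
  shows "op_norm M \<le> b \<Longrightarrow> mbound M b"
  unfolding mbound_def op_norm_def
proof
  fix v :: "complex^'d"
  assume "onorm ((*v) M) \<le> b"
  have "norm (M *v v) \<le> onorm ((*v) M) * norm v"
    by (rule onorm) simp
  also have "\<dots> \<le> b * norm v" using \<open>onorm ((*v) M) \<le> b\<close> by (simp add: mult_right_mono)
  finally show "norm (M *v v) \<le> b * norm v" .
qed

lemma integral_pmf_sum:
  fixes f :: "'a \<Rightarrow> 'b::{banach, second_countable_topology}"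
  shows "finite (set_pmf Q) \<Longrightarrow> measure_pmf.expectation Q f = (\<Sum>a\<in>set_pmf Q. pmf Q a *\<^sub>R f a)"
  by (rule integral_measure_pmf) auto

lemma mbound_integral:
  assumes "finite (set_pmf Q)" "\<forall>w\<in>set_pmf Q. mbound (D w) b"
  shows "mbound (measure_pmf.expectation Q D) b"
proof -
  have "mbound (\<Sum>w\<in>set_pmf Q. pmf Q w *\<^sub>R D w) ((\<Sum>w\<in>set_pmf Q. pmf Q w) * b)"
    using assms by (intro mbound_sum) auto
  moreover have "(\<Sum>w\<in>set_pmf Q. pmf Q w) = 1" using assms(1) by (simp add: sum_pmf_eq_1)
  ultimately show ?thesis by (simp only: integral_pmf_sum[OF assms(1), of D]) simp
qed

lemma herm_add: "hermitian_mat A \<Longrightarrow> hermitian_mat B \<Longrightarrow> hermitian_mat (A + B)"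
  unfolding hermitian_mat_def
proof (intro allI)
  fix i j
  assume a: "\<forall>i j. A $ i $ j = cnj (A $ j $ i)" and b: "\<forall>i j. B $ i $ j = cnj (B $ j $ i)"
  have a1: "A $ i $ j = cnj (A $ j $ i)" and b1: "B $ i $ j = cnj (B $ j $ i)" using a b by blast+
  show "(A + B) $ i $ j = cnj ((A + B) $ j $ i)"
    by (simp only: vector_add_component complex_cnj_add a1 b1)
qed

lemma herm_diff: "hermitian_mat A \<Longrightarrow> hermitian_mat B \<Longrightarrow> hermitian_mat (A - B)"
  unfolding hermitian_mat_def
proof (intro allI)
  fix i j
  assume a: "\<forall>i j. A $ i $ j = cnj (A $ j $ i)" and b: "\<forall>i j. B $ i $ j = cnj (B $ j $ i)"
  have a1: "A $ i $ j = cnj (A $ j $ i)" and b1: "B $ i $ j = cnj (B $ j $ i)" using a b by blast+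
  show "(A - B) $ i $ j = cnj ((A - B) $ j $ i)"
    by (simp only: vector_minus_component complex_cnj_diff a1 b1)
qed

lemma herm_scale: "hermitian_mat A \<Longrightarrow> hermitian_mat ((c::real) *\<^sub>R A)"
  unfolding hermitian_mat_def
proof (intro allI)
  fix i j
  assume a: "\<forall>i j. A $ i $ j = cnj (A $ j $ i)"
  have a1: "A $ i $ j = cnj (A $ j $ i)" using a by blast
  show "(c *\<^sub>R A) $ i $ j = cnj ((c *\<^sub>R A) $ j $ i)"
    by (simp only: vector_scaleR_component complex_cnj_scaleR a1)
qed

lemma herm_zero: "hermitian_mat 0"
  by (simp add: hermitian_mat_def)

lemma herm_integral:
  assumes "finite (set_pmf Q)" "\<forall>w\<in>set_pmf Q. hermitian_mat (D w)"
  shows "hermitian_mat (measure_pmf.expectation Q D)"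
proof -
  have "hermitian_mat (\<Sum>w\<in>W. pmf Q w *\<^sub>R D w)" if "finite W" "W \<subseteq> set_pmf Q" for W
    using that
  proof (induction W rule: finite_induct)
    case empty
    then show ?case by (simp add: herm_zero)
  next
    case (insert x F)
    then have "hermitian_mat (pmf Q x *\<^sub>R D x + (\<Sum>w\<in>F. pmf Q w *\<^sub>R D w))"
      using assms(2) by (intro herm_add herm_scale) auto
    then show ?case using insert by simp
  qed
  then show ?thesis using assms(1) by (simp only: integral_pmf_sum[OF assms(1), of D])
qed

lemma cond_pmf_cong_supp:
  assumes "set_pmf p \<inter> E \<noteq> {}" "set_pmf p \<inter> E = set_pmf p \<inter> E'"
  shows "cond_pmf p E = cond_pmf p E'"
proof -
  have ne': "set_pmf p \<inter> E' \<noteq> {}" using assms by simp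
  have "E \<inter> set_pmf p = E' \<inter> set_pmf p" using assms(2) by blast
  then have m: "measure p E = measure p E'"
    using measure_Int_set_pmf[of p E] measure_Int_set_pmf[of p E'] by simp
  show ?thesis
  proof (rule pmf_eqI)
    fix x
    show "pmf (cond_pmf p E) x = pmf (cond_pmf p E') x"
      unfolding pmf_cond[OF assms(1)] pmf_cond[OF ne'] m
      using assms(2) by (auto simp: pmf_eq_0_set_pmf)
  qed
qed

lemma cond_mix:
  fixes f :: "'a \<Rightarrow> 'b::{banach, second_countable_topology}"
  assumes fin: "finite (set_pmf p)" and ne1: "set_pmf p \<inter> (B \<inter> C) \<noteq> {}" and ne0: "set_pmf p \<inter> (B - C) \<noteq> {}"
  shows "measure_pmf.expectation (cond_pmf p B) f =
     (measure p (B \<inter> C) / measure p B) *\<^sub>R measure_pmf.expectation (cond_pmf p (B \<inter> C)) f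
   + (measure p (B - C) / measure p B) *\<^sub>R measure_pmf.expectation (cond_pmf p (B - C)) f"
    and "measure p (B \<inter> C) / measure p B + measure p (B - C) / measure p B = 1"
proof -
  have ne: "set_pmf p \<inter> B \<noteq> {}" using ne1 by auto
  have m1: "measure p (B \<inter> C) > 0" using ne1 by (auto intro: measure_pmf_posI)
  have m0: "measure p (B - C) > 0" using ne0 by (auto intro: measure_pmf_posI)
  have msum: "measure p B = measure p (B \<inter> C) + measure p (B - C)"
  proof -
    have "B = (B \<inter> C) \<union> (B - C)" by auto
    hence "measure p B = measure p ((B \<inter> C) \<union> (B - C))" by simp
    also have "\<dots> = measure p (B \<inter> C) + measure p (B - C)"
      by (rule measure_pmf.finite_measure_Union) auto
    finally show ?thesis .
  qed
  show "measure p (B \<inter> C) / measure p B + measure p (B - C) / measure p B = 1"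
    using m1 m0 msum by (simp add: add_divide_distrib[symmetric])
  have I: "\<And>E. set_pmf p \<inter> E \<noteq> {} \<Longrightarrow> measure_pmf.expectation (cond_pmf p E) f = (\<Sum>a\<in>set_pmf p. pmf (cond_pmf p E) a *\<^sub>R f a)"
    by (rule integral_measure_pmf[OF fin]) auto
  have pw: "\<And>a. pmf (cond_pmf p B) a = (measure p (B \<inter> C) / measure p B) * pmf (cond_pmf p (B \<inter> C)) a
       + (measure p (B - C) / measure p B) * pmf (cond_pmf p (B - C)) a"
  proof -
    fix a
    show "pmf (cond_pmf p B) a = (measure p (B \<inter> C) / measure p B) * pmf (cond_pmf p (B \<inter> C)) a
       + (measure p (B - C) / measure p B) * pmf (cond_pmf p (B - C)) a"
    proof (cases "a \<in> B")
      case True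
      show ?thesis
      proof (cases "a \<in> C")
        case True
        then show ?thesis unfolding pmf_cond[OF ne] pmf_cond[OF ne1] pmf_cond[OF ne0]
          using \<open>a \<in> B\<close> m1 by simp
      next
        case False
        then show ?thesis unfolding pmf_cond[OF ne] pmf_cond[OF ne1] pmf_cond[OF ne0]
          using \<open>a \<in> B\<close> m0 by simp
      qed
    next
      case False
      then show ?thesis unfolding pmf_cond[OF ne] pmf_cond[OF ne1] pmf_cond[OF ne0] by simp
    qed
  qed
  show "measure_pmf.expectation (cond_pmf p B) f =
     (measure p (B \<inter> C) / measure p B) *\<^sub>R measure_pmf.expectation (cond_pmf p (B \<inter> C)) f
   + (measure p (B - C) / measure p B) *\<^sub>R measure_pmf.expectation (cond_pmf p (B - C)) f"
  proof -
    define q1 where "q1 = measure p (B \<inter> C) / measure p B"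
    define q0 where "q0 = measure p (B - C) / measure p B"
    have "q1 *\<^sub>R (\<Sum>a\<in>set_pmf p. pmf (cond_pmf p (B \<inter> C)) a *\<^sub>R f a)
        + q0 *\<^sub>R (\<Sum>a\<in>set_pmf p. pmf (cond_pmf p (B - C)) a *\<^sub>R f a)
        = (\<Sum>a\<in>set_pmf p. (q1 * pmf (cond_pmf p (B \<inter> C)) a) *\<^sub>R f a)
        + (\<Sum>a\<in>set_pmf p. (q0 * pmf (cond_pmf p (B - C)) a) *\<^sub>R f a)"
      by (simp only: scaleR_sum_right scaleR_scaleR)
    also have "\<dots> = (\<Sum>a\<in>set_pmf p. (q1 * pmf (cond_pmf p (B \<inter> C)) a + q0 * pmf (cond_pmf p (B - C)) a) *\<^sub>R f a)"
      by (simp only: sum.distrib[symmetric] scaleR_add_left)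
    also have "\<dots> = (\<Sum>a\<in>set_pmf p. pmf (cond_pmf p B) a *\<^sub>R f a)"
      by (simp only: pw q1_def q0_def)
    finally have X: "q1 *\<^sub>R (\<Sum>a\<in>set_pmf p. pmf (cond_pmf p (B \<inter> C)) a *\<^sub>R f a)
        + q0 *\<^sub>R (\<Sum>a\<in>set_pmf p. pmf (cond_pmf p (B - C)) a *\<^sub>R f a)
        = (\<Sum>a\<in>set_pmf p. pmf (cond_pmf p B) a *\<^sub>R f a)" .
    show ?thesis
      unfolding I[OF ne] I[OF ne1] I[OF ne0] using X unfolding q1_def q0_def by (rule sym)
  qed
qed



lemma mbound_mono: "mbound M b \<Longrightarrow> b \<le> b' \<Longrightarrow> mbound M b'"
  unfolding mbound_def by (meson mult_right_mono norm_ge_zero order_trans)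

lemma dist_two:
  assumes "i \<in> {1..n}" "a \<in> {1..n}" "i \<noteq> a"
    and "\<And>j. ((j \<in> A) \<noteq> (j \<in> A')) \<longleftrightarrow> j \<in> {i, a}"
  shows "dist_alpha n \<alpha> A A' = \<alpha> i + \<alpha> a"
proof -
  have "dist_alpha n \<alpha> A A' = (\<Sum>j\<in>{1..n}. if j \<in> {i, a} then \<alpha> j else 0)"
    unfolding dist_alpha_def by (rule sum.cong) (use assms(4) in auto)
  also have "\<dots> = sum \<alpha> ({1..n} \<inter> {i, a})"
    by (rule sum.inter_restrict[symmetric]) simp
  also have "{1..n} \<inter> {i, a} = {i, a}" using assms by auto
  finally show ?thesis using assms(3) by simp
qed

lemma coupling_bound:
  fixes f :: "nat set \<Rightarrow> complex^'d^'d"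
  assumes f_lip: "\<forall>x y. x \<subseteq> {1..n} \<longrightarrow> y \<subseteq> {1..n} \<longrightarrow> op_norm (f x - f y) \<le> dist_alpha n \<alpha> x y"
    and X_range: "set_pmf X \<subseteq> Pow {1..n}"
    and X_hom: "\<forall>A\<in>set_pmf X. card A = k"
    and X_scp: "stoch_covering n X"
    and S: "S \<subseteq> {1..n}" "z \<subseteq> S" "a \<in> {1..n}" "a \<notin> S"
    and beta: "\<alpha> a \<le> \<beta>" "\<forall>j\<in>{1..n} - S. \<alpha> j \<le> \<beta>"
    and ne0: "set_pmf X \<inter> {A. A \<inter> insert a S = z} \<noteq> {}"
    and ne1: "set_pmf X \<inter> {A. A \<inter> insert a S = insert a z} \<noteq> {}"
  shows "mbound (measure_pmf.expectation (cond_pmf X {A. A \<inter> insert a S = z}) f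
               - measure_pmf.expectation (cond_pmf X {A. A \<inter> insert a S = insert a z}) f) (2 * \<beta>)"
proof -
  define S' where "S' = insert a S"
  have S'sub: "S' \<subseteq> {1..n}" using S by (auto simp: S'_def)
  have az: "a \<notin> z" using S by auto
  have xs: "insert a z \<inter> S' = insert a z" "z \<inter> S' = z" using S by (auto simp: S'_def)
  have cov: "covers S' (insert a z \<inter> S') (z \<inter> S')"
    unfolding xs covers_def using az by (auto simp: S'_def)
  have zsub: "z \<subseteq> {1..n}" "insert a z \<subseteq> {1..n}" using S by auto
  have ne0': "set_pmf X \<inter> {A. A \<inter> S' = z} \<noteq> {}" using ne0 by (simp add: S'_def)
  have ne1': "set_pmf X \<inter> {A. A \<inter> S' = insert a z} \<noteq> {}" using ne1 by (simp add: S'_def)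
  have pre: "S' \<subseteq> {1..n} \<and> insert a z \<subseteq> {1..n} \<and> z \<subseteq> {1..n} \<and> covers S' (insert a z \<inter> S') (z \<inter> S')
     \<and> set_pmf X \<inter> {A. A \<inter> S' = insert a z \<inter> S'} \<noteq> {} \<and> set_pmf X \<inter> {A. A \<inter> S' = z \<inter> S'} \<noteq> {}"
    using S'sub zsub cov ne0' ne1' unfolding xs by blast
  have "\<exists>c :: (nat set \<times> nat set) pmf. map_pmf fst c = cond_law_compl X S' (z \<inter> S') \<and>
            map_pmf snd c = cond_law_compl X S' (insert a z \<inter> S') \<and>
            (\<forall>(u, v)\<in>set_pmf c. covers ({1..n} - S') u v)"
    using mp[OF X_scp[unfolded stoch_covering_def, THEN spec, THEN spec, THEN spec] pre] .
  then obtain c :: "(nat set \<times> nat set) pmf" where c1: "map_pmf fst c = cond_law_compl X S' z"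
    and c2: "map_pmf snd c = cond_law_compl X S' (insert a z)"
    and c3: "\<forall>(u, v)\<in>set_pmf c. covers ({1..n} - S') u v"
    unfolding xs by blast
  define Q0 where "Q0 = cond_pmf X {A. A \<inter> S' = z}"
  define Q1 where "Q1 = cond_pmf X {A. A \<inter> S' = insert a z}"
  have fX: "finite (set_pmf X)"
    by (rule finite_subset[OF X_range]) simp
  have sQ0: "set_pmf Q0 = set_pmf X \<inter> {A. A \<inter> S' = z}" unfolding Q0_def using ne0' by simp
  have sQ1: "set_pmf Q1 = set_pmf X \<inter> {A. A \<inter> S' = insert a z}" unfolding Q1_def using ne1' by simp
  have fQ0: "finite (set_pmf Q0)" using fX sQ0 by simp
  have fQ1: "finite (set_pmf Q1)" using fX sQ1 by simp
  have sfst: "set_pmf (map_pmf fst c) = (\<lambda>A. A - S') ` set_pmf Q0"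
    unfolding c1 cond_law_compl_def Q0_def by simp
  have ssnd: "set_pmf (map_pmf snd c) = (\<lambda>A. A - S') ` set_pmf Q1"
    unfolding c2 cond_law_compl_def Q1_def by simp
  have csub: "set_pmf c \<subseteq> set_pmf (map_pmf fst c) \<times> set_pmf (map_pmf snd c)"
    by force
  have fc: "finite (set_pmf c)"
  proof (rule finite_subset[OF csub])
    show "finite (set_pmf (map_pmf fst c) \<times> set_pmf (map_pmf snd c))"
      unfolding sfst ssnd using fQ0 fQ1 by simp
  qed
  have E0: "measure_pmf.expectation Q0 f = measure_pmf.expectation c (\<lambda>w. f (fst w \<union> z))"
  proof -
    have "measure_pmf.expectation c (\<lambda>w. f (fst w \<union> z)) = measure_pmf.expectation (map_pmf fst c) (\<lambda>u. f (u \<union> z))"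
      by simp
    also have "\<dots> = measure_pmf.expectation Q0 (\<lambda>A. f ((A - S') \<union> z))"
      unfolding c1 cond_law_compl_def Q0_def by simp
    also have "\<dots> = measure_pmf.expectation Q0 f"
      unfolding integral_pmf_sum[OF fQ0]
      by (rule sum.cong) (auto simp: sQ0 Un_Diff_Int)
    finally show ?thesis ..
  qed
  have rec1: "\<And>x. x \<inter> S' = insert a z \<Longrightarrow> insert a (x - S' \<union> z) = x" by blast
  have E1: "measure_pmf.expectation Q1 f = measure_pmf.expectation c (\<lambda>w. f (snd w \<union> insert a z))"
  proof -
    have "measure_pmf.expectation c (\<lambda>w. f (snd w \<union> insert a z)) = measure_pmf.expectation (map_pmf snd c) (\<lambda>u. f (u \<union> insert a z))"
      by simp
    also have "\<dots> = measure_pmf.expectation Q1 (\<lambda>A. f ((A - S') \<union> insert a z))"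
      unfolding c2 cond_law_compl_def Q1_def by simp
    also have "\<dots> = measure_pmf.expectation Q1 f"
      unfolding integral_pmf_sum[OF fQ1]
      using rec1 by (intro sum.cong) (auto simp: sQ1)
    finally show ?thesis ..
  qed
  have diff: "measure_pmf.expectation Q0 f - measure_pmf.expectation Q1 f
     = measure_pmf.expectation c (\<lambda>w. f (fst w \<union> z) - f (snd w \<union> insert a z))"
    unfolding E0 E1 integral_pmf_sum[OF fc]
    by (simp add: sum_subtractf scaleR_diff_right)
  have pw: "mbound (f (fst w \<union> z) - f (snd w \<union> insert a z)) (2 * \<beta>)" if w: "w \<in> set_pmf c" for w
  proof -
    obtain u v where uv: "w = (u, v)" by (cases w)
    have "u \<in> set_pmf (map_pmf fst c)" using w uv by force
    then have "u \<in> (\<lambda>A. A - S') ` set_pmf Q0" by (simp only: sfst)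
    then obtain A where A: "A \<in> set_pmf X" "A \<inter> S' = z" "u = A - S'" by (auto simp: sfst sQ0)
    have "v \<in> set_pmf (map_pmf snd c)" using w uv by force
    then have "v \<in> (\<lambda>A. A - S') ` set_pmf Q1" by (simp only: ssnd)
    then obtain A' where A': "A' \<in> set_pmf X" "A' \<inter> S' = insert a z" "v = A' - S'" by (auto simp: ssnd sQ1)
    have Aeq: "u \<union> z = A" using A by auto
    have A'eq: "v \<union> insert a z = A'" using A' by auto
    have Asub: "A \<subseteq> {1..n}" "A' \<subseteq> {1..n}" using A(1) A'(1) X_range by auto
    have fin: "finite A" "finite A'" using Asub finite_subset by auto
    have cards: "card A = k" "card A' = k" using A(1) A'(1) X_hom by auto
    have aS': "a \<in> S'" by (simp add: S'_def)
    have cv: "covers ({1..n} - S') u v" using c3 w uv by auto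
    show ?thesis
    proof (cases "u = v")
      case True
      then have "A' = insert a A" using Aeq A'eq by auto
      moreover have "a \<notin> A" using A aS' az by auto
      ultimately have "card A' = Suc (card A)" using fin by simp
      then show ?thesis using cards by simp
    next
      case False
      then have "\<exists>i\<in>{1..n} - S'. i \<notin> v \<and> u = insert i v" using cv unfolding covers_def by blast
      then obtain i where i: "i \<in> {1..n} - S'" "i \<notin> v" "u = insert i v" by blast
      have iz: "i \<notin> z" using i S by (auto simp: S'_def)
      have av: "a \<notin> v" using A' aS' by auto
      have ia: "i \<noteq> a" using i aS' by auto
      have AA: "A = insert i (v \<union> z)" using Aeq i by auto
      have AA': "A' = insert a (v \<union> z)" using A'eq by auto
      have memb: "\<And>j. ((j \<in> A) \<noteq> (j \<in> A')) \<longleftrightarrow> j \<in> {i, a}"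
        unfolding AA AA' using i(2) iz av az ia by blast
      have i1: "i \<in> {1..n}" using i(1) by blast
      have d: "dist_alpha n \<alpha> A A' = \<alpha> i + \<alpha> a"
        by (rule dist_two[OF i1 S(3) ia memb])
      have ai: "\<alpha> i \<le> \<beta>" using beta(2) i(1) by (auto simp: S'_def)
      have "op_norm (f A - f A') \<le> dist_alpha n \<alpha> A A'" using f_lip Asub by blast
      then have opn: "op_norm (f A - f A') \<le> 2 * \<beta>" using d ai beta(1) by linarith
      have "f (fst w \<union> z) - f (snd w \<union> insert a z) = f A - f A'" using Aeq A'eq uv by simp
      then show ?thesis using mbound_op[OF opn] by simp
    qed
  qed
  have "mbound (measure_pmf.expectation Q0 f - measure_pmf.expectation Q1 f) (2 * \<beta>)"
    unfolding diff using fc pw by (intro mbound_integral) auto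
  then show ?thesis by (simp add: Q0_def Q1_def S'_def)
qed



lemma step_bound:
  fixes f :: "nat set \<Rightarrow> complex^'d^'d"
  assumes f_lip: "\<forall>x y. x \<subseteq> {1..n} \<longrightarrow> y \<subseteq> {1..n} \<longrightarrow> op_norm (f x - f y) \<le> dist_alpha n \<alpha> x y"
    and X_range: "set_pmf X \<subseteq> Pow {1..n}"
    and X_hom: "\<forall>A\<in>set_pmf X. card A = k"
    and X_scp: "stoch_covering n X"
    and S: "S \<subseteq> {1..n}" "z \<subseteq> S" "a \<in> {1..n}" "a \<notin> S"
    and beta: "\<alpha> a \<le> \<beta>" "\<forall>j\<in>{1..n} - S. \<alpha> j \<le> \<beta>" "0 \<le> \<beta>"
    and A0: "A0 \<in> set_pmf X" "A0 \<inter> S = z"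
  shows "mbound (measure_pmf.expectation (cond_pmf X ({A. A \<inter> S = z} \<inter> {A. (a \<in> A) = (a \<in> A0)})) f
               - measure_pmf.expectation (cond_pmf X {A. A \<inter> S = z}) f) (2 * \<beta>)"
proof -
  define B where "B = {A. A \<inter> S = z}"
  define C where "C = {A. a \<in> A}"
  have az: "a \<notin> z" using S by auto
  have BC: "B \<inter> C = {A. A \<inter> insert a S = insert a z}" using S az by (auto simp: B_def C_def)
  have BmC: "B - C = {A. A \<inter> insert a S = z}" using S az by (auto simp: B_def C_def)
  have fX: "finite (set_pmf X)" by (rule finite_subset[OF X_range]) simp
  have neB: "set_pmf X \<inter> B \<noteq> {}" using A0 by (auto simp: B_def)
  let ?E = "\<lambda>E. measure_pmf.expectation (cond_pmf X E) f"
  have ev: "{A. A \<inter> S = z} \<inter> {A. (a \<in> A) = (a \<in> A0)} = (if a \<in> A0 then B \<inter> C else B - C)"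
    by (auto simp: B_def C_def)
  show ?thesis
  proof (cases "set_pmf X \<inter> (B \<inter> C) \<noteq> {} \<and> set_pmf X \<inter> (B - C) \<noteq> {}")
    case True
    then have ne1: "set_pmf X \<inter> (B \<inter> C) \<noteq> {}" and ne0: "set_pmf X \<inter> (B - C) \<noteq> {}" by auto
    define q1 where "q1 = measure X (B \<inter> C) / measure X B"
    define q0 where "q0 = measure X (B - C) / measure X B"
    have mix: "?E B = q1 *\<^sub>R ?E (B \<inter> C) + q0 *\<^sub>R ?E (B - C)" and qs: "q1 + q0 = 1"
      using cond_mix(1)[OF fX ne1 ne0, of f] cond_mix(2)[OF fX ne1 ne0] by (simp_all add: q1_def q0_def)
    have q0n: "0 \<le> q0" and q1n: "0 \<le> q1" by (simp_all add: q0_def q1_def)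
    have q0: "0 \<le> q0" "q0 \<le> 1" and q1: "0 \<le> q1" "q1 \<le> 1"
      using qs q0n q1n by linarith+
    have D: "mbound (?E (B - C) - ?E (B \<inter> C)) (2 * \<beta>)"
      unfolding BC BmC
      by (rule coupling_bound[OF f_lip X_range X_hom X_scp S beta(1,2)])
         (use ne1 ne0 BC BmC in simp_all)
    show ?thesis
    proof (cases "a \<in> A0")
      case True
      have q1e: "q1 = 1 - q0" using qs by simp
      have "?E (B \<inter> C) - ?E B = q0 *\<^sub>R (?E (B \<inter> C) - ?E (B - C))"
        unfolding mix q1e by (simp add: algebra_simps)
      moreover have "mbound (q0 *\<^sub>R (?E (B \<inter> C) - ?E (B - C))) (q0 * (2 * \<beta>))"
        by (rule mbound_scale[OF q0(1) mbound_swap[OF D]])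
      ultimately have "mbound (?E (B \<inter> C) - ?E B) (2 * \<beta>)"
        using q0 beta(3) by (auto intro: mbound_mono simp: mult_left_le_one_le)
      then show ?thesis using True ev by (simp add: B_def)
    next
      case False
      have q0e: "q0 = 1 - q1" using qs by simp
      have "?E (B - C) - ?E B = q1 *\<^sub>R (?E (B - C) - ?E (B \<inter> C))"
        unfolding mix q0e by (simp add: algebra_simps)
      moreover have "mbound (q1 *\<^sub>R (?E (B - C) - ?E (B \<inter> C))) (q1 * (2 * \<beta>))"
        by (rule mbound_scale[OF q1(1) D])
      ultimately have "mbound (?E (B - C) - ?E B) (2 * \<beta>)"
        using q1 beta(3) by (auto intro: mbound_mono simp: mult_left_le_one_le)
      then show ?thesis using False ev by (simp add: B_def)
    qed
  next
    case False
    have "cond_pmf X ({A. A \<inter> S = z} \<inter> {A. (a \<in> A) = (a \<in> A0)}) = cond_pmf X B"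
    proof (rule cond_pmf_cong_supp)
      show "set_pmf X \<inter> ({A. A \<inter> S = z} \<inter> {A. (a \<in> A) = (a \<in> A0)}) \<noteq> {}" using A0 by auto
      show "set_pmf X \<inter> ({A. A \<inter> S = z} \<inter> {A. (a \<in> A) = (a \<in> A0)}) = set_pmf X \<inter> B"
        using False A0 unfolding ev by (auto simp: B_def C_def split: if_splits)
    qed
    then show ?thesis using beta(3) by (simp add: B_def mbound_zero)
  qed
qed



lemma CE:
  fixes f :: "nat set \<Rightarrow> complex^'d^'d"
  assumes X_range: "set_pmf X \<subseteq> Pow {1..n}"
    and X_hom: "\<forall>A\<in>set_pmf X. card A = k"
    and om: "(A0, ys0) \<in> set_pmf (joint k X)"
    and l: "l \<le> 2 * k"
  shows "cond_exp_pmf (joint k X) (gen k l) (\<lambda>\<omega>'. f (fst \<omega>')) (A0, ys0) =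
    measure_pmf.expectation (cond_pmf X {A. A \<inter> {1..min l k} = A0 \<inter> {1..min l k} \<and> set (take (l - k) ys0) - {0} \<subseteq> A}) f"
proof -
  have A0X: "A0 \<in> set_pmf X" and ys0: "ys0 \<in> set_pmf (Ys k A0 k)" using om by (auto simp: joint_def)
  define r where "r = l - k"
  have rk: "r \<le> k" using l by (simp add: r_def)
  define J where "J = joint k X"
  define h where "h = (\<lambda>w :: nat set \<times> nat list. (fst w, take r (snd w)))"
  define P where "P = (\<lambda>A. A \<inter> {1..min l k} = A0 \<inter> {1..min l k})"
  define y0 where "y0 = take r ys0"
  define Q where "Q = (\<lambda>A. set y0 - {0} \<subseteq> A)"
  define E where "E = {w :: nat set \<times> nat list. P (fst w) \<and> snd w = y0}"
  have hJ: "map_pmf h J = bind_pmf X (\<lambda>A. map_pmf (\<lambda>y. (A, y)) (Ys k A r))"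
    unfolding J_def joint_def map_bind_pmf
  proof (rule bind_pmf_cong)
    fix A
    have "map_pmf h (map_pmf (\<lambda>ys. (A, ys)) (Ys k A k)) = map_pmf (\<lambda>y. (A, y)) (map_pmf (take r) (Ys k A k))"
      by (simp add: pmf.map_comp o_def h_def)
    then show "map_pmf h (map_pmf (\<lambda>ys. (A, ys)) (Ys k A k)) = map_pmf (\<lambda>y. (A, y)) (Ys k A r)"
      using Ys_map_take[OF rk] by simp
  qed simp
  have G: "{\<omega>'. gen k l \<omega>' = gen k l (A0, ys0)} = h -` E"
    by (auto simp: gen_def h_def E_def P_def y0_def r_def)
  have neJ: "set_pmf J \<inter> h -` E \<noteq> {}"
    using om by (auto simp: J_def h_def E_def P_def y0_def)
  have y0mem: "y0 \<in> set_pmf (Ys k A0 r)" using Ys_take[OF ys0 rk] by (simp add: y0_def)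
  have form: "\<forall>A\<in>set_pmf X. P A \<longrightarrow> pmf (Ys k A r) y0 = pmf (Ys k A0 r) y0 * (if Q A then 1 else 0)"
  proof (intro ballI impI)
    fix A assume AX: "A \<in> set_pmf X" and PA: "P A"
    show "pmf (Ys k A r) y0 = pmf (Ys k A0 r) y0 * (if Q A then 1 else 0)"
    proof (cases "r = 0")
      case True
      then show ?thesis by (simp add: y0_def Q_def)
    next
      case False
      then have mk: "min l k = k" using r_def by simp
      have Asub: "A \<subseteq> {1..n}" "A0 \<subseteq> {1..n}" using AX A0X X_range by auto
      have fin: "finite A" "finite A0" using Asub finite_subset by auto
      have z0: "0 \<notin> A0" using Asub by auto
      have ck: "card A = k" "card A0 = k" using AX A0X X_hom by auto
      have Aint: "A \<inter> {1..k} = A0 \<inter> {1..k}" using PA mk by (simp add: P_def)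
      have "card (A - {1..k}) = card A - card (A \<inter> {1..k})" using fin by (simp add: card_Diff_subset_Int)
      also have "\<dots> = card A0 - card (A0 \<inter> {1..k})" using ck Aint by simp
      also have "\<dots> = card (A0 - {1..k})" using fin by (simp add: card_Diff_subset_Int)
      finally have cardeq: "card (A - {1..k}) = card (A0 - {1..k})" .
      show ?thesis using Ys_pmf_form[OF fin(1) fin(2) z0 cardeq ys0 rk] by (simp add: y0_def Q_def)
    qed
  qed
  have cj: "map_pmf fst (cond_pmf (bind_pmf X (\<lambda>A. map_pmf (\<lambda>y. (A, y)) (Ys k A r))) {w. P (fst w) \<and> snd w = y0})
         = cond_pmf X {A. P A \<and> Q A}"
    by (rule cond_joint[OF A0X _ y0mem form]) (simp add: P_def)
  have "map_pmf fst (cond_pmf J (h -` E)) = map_pmf fst (map_pmf h (cond_pmf J (h -` E)))"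
    by (simp add: pmf.map_comp o_def h_def)
  also have "\<dots> = map_pmf fst (cond_pmf (map_pmf h J) E)"
    by (simp add: cond_map_pmf[OF neJ])
  also have "\<dots> = cond_pmf X {A. P A \<and> Q A}"
    unfolding hJ E_def by (rule cj)
  finally have mf: "map_pmf fst (cond_pmf J (h -` E)) = cond_pmf X {A. P A \<and> Q A}" .
  have "cond_exp_pmf (joint k X) (gen k l) (\<lambda>\<omega>'. f (fst \<omega>')) (A0, ys0)
      = measure_pmf.expectation (map_pmf fst (cond_pmf J (h -` E))) f"
    unfolding cond_exp_pmf_def G J_def by simp
  also have "\<dots> = measure_pmf.expectation (cond_pmf X {A. P A \<and> Q A}) f" by (simp only: mf)
  finally show ?thesis by (simp add: P_def Q_def y0_def r_def)
qed



lemma cexp_herm: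
  fixes f :: "nat set \<Rightarrow> complex^'d^'d"
  assumes f_herm: "\<forall>x. x \<subseteq> {1..n} \<longrightarrow> hermitian_mat (f x)"
    and X_range: "set_pmf X \<subseteq> Pow {1..n}"
    and ne: "set_pmf X \<inter> E \<noteq> {}"
  shows "hermitian_mat (measure_pmf.expectation (cond_pmf X E) f)"
proof (rule herm_integral)
  have fX: "finite (set_pmf X)" by (rule finite_subset[OF X_range]) simp
  show "finite (set_pmf (cond_pmf X E))" using fX ne by simp
  show "\<forall>w\<in>set_pmf (cond_pmf X E). hermitian_mat (f w)" using ne f_herm X_range by auto
qed

lemma int_insert_eq: "l \<notin> S \<Longrightarrow> (A \<inter> insert l S = B \<inter> insert l S) \<longleftrightarrow> (A \<inter> S = B \<inter> S \<and> (l \<in> A) = (l \<in> B))"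
  by blast

lemma int_union_eq: "T \<inter> K = {} \<Longrightarrow> T \<subseteq> A0 \<Longrightarrow> (A \<inter> (K \<union> T) = (A0 \<inter> K) \<union> T) \<longleftrightarrow> (A \<inter> K = A0 \<inter> K \<and> T \<subseteq> A)"
  by blast

theorem lemma5p2:
  fixes n k :: nat and \<alpha> :: "nat \<Rightarrow> real"
    and f :: "nat set \<Rightarrow> complex^'d^'d" and X :: "nat set pmf"
  assumes alpha_nonneg: "\<forall>i\<in>{1..n}. 0 \<le> \<alpha> i"
    and alpha_noninc: "\<forall>i\<in>{1..n}. \<forall>j\<in>{1..n}. i \<le> j \<longrightarrow> \<alpha> j \<le> \<alpha> i"
    and f_herm: "\<forall>x. x \<subseteq> {1..n} \<longrightarrow> hermitian_mat (f x)"
    and f_lip: "\<forall>x y. x \<subseteq> {1..n} \<longrightarrow> y \<subseteq> {1..n} \<longrightarrow> op_norm (f x - f y) \<le> dist_alpha n \<alpha> x y"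
    and X_range: "set_pmf X \<subseteq> Pow {1..n}"
    and X_hom: "\<forall>A\<in>set_pmf X. card A = k"
    and X_scp: "stoch_covering n X"
  shows "\<forall>\<omega>\<in>set_pmf (joint k X).
           (\<forall>l\<in>{1..k}. psd_le (mart_diff f k X l \<omega> ** mart_diff f k X l \<omega>)
                                 ((4 * (\<alpha> l)\<^sup>2) *\<^sub>R mat 1))
         \<and> (\<forall>l\<in>{k+1..2*k}. psd_le (mart_diff f k X l \<omega> ** mart_diff f k X l \<omega>)
                                 ((4 * (\<alpha> k)\<^sup>2) *\<^sub>R mat 1))"
proof
  fix \<omega> assume om: "\<omega> \<in> set_pmf (joint k X)"
  obtain A0 ys0 where w: "\<omega> = (A0, ys0)" by (cases \<omega>)
  have om': "(A0, ys0) \<in> set_pmf (joint k X)" using om w by simp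
  have A0X: "A0 \<in> set_pmf X" and ys0: "ys0 \<in> set_pmf (Ys k A0 k)" using om' by (auto simp: joint_def)
  have A0sub: "A0 \<subseteq> {1..n}" using A0X X_range by auto
  have cA0: "card A0 = k" using A0X X_hom by auto
  have kn: "k \<le> n" using card_mono[OF _ A0sub] cA0 by simp
  have fA0: "finite A0" using A0sub finite_subset by auto
  have len: "length ys0 = k" using Ys_len[OF ys0] .
  define Ev where "Ev = (\<lambda>l. {A. A \<inter> {1..min l k} = A0 \<inter> {1..min l k} \<and> set (take (l - k) ys0) - {0} \<subseteq> A})"
  define CE where "CE = (\<lambda>E. measure_pmf.expectation (cond_pmf X E) f)"
  have md: "mart_diff f k X l \<omega> = CE (Ev l) - CE (Ev (l - 1))" if "l \<le> 2 * k" for l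
    unfolding mart_diff_def w CE_def Ev_def
    using CE[OF X_range X_hom om' that, of f] CE[OF X_range X_hom om', of "l - 1" f] that by simp
  have neEv: "set_pmf X \<inter> Ev l \<noteq> {}" if "l \<le> 2 * k" for l
  proof -
    have "set (take (l - k) ys0) \<subseteq> set ys0" by (rule set_take_subset)
    moreover have "\<forall>y\<in>set ys0. y = 0 \<or> (y \<in> A0 \<and> y \<notin> {1..k})" using Ys_supp[OF fA0 ys0] by blast
    ultimately have "A0 \<in> Ev l" unfolding Ev_def by blast
    then show ?thesis using A0X by blast
  qed
  have hermN: "hermitian_mat (mart_diff f k X l \<omega>)" if "l \<le> 2 * k" for l
    unfolding md[OF that] CE_def
    by (intro herm_diff cexp_herm[OF f_herm X_range] neEv) (use that in auto)
  have final: "psd_le (mart_diff f k X l \<omega> ** mart_diff f k X l \<omega>) ((4 * \<beta>\<^sup>2) *\<^sub>R mat 1)"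
    if "l \<le> 2 * k" "mbound (mart_diff f k X l \<omega>) (2 * \<beta>)" "0 \<le> \<beta>" for l \<beta>
  proof -
    have "psd_le (mart_diff f k X l \<omega> ** mart_diff f k X l \<omega>) ((2 * \<beta>)^2 *\<^sub>R mat 1)"
      using psd_from_mbound[OF hermN[OF that(1)] that(2)] that(3) by simp
    then show ?thesis by (simp add: power_mult_distrib)
  qed
  show "(\<forall>l\<in>{1..k}. psd_le (mart_diff f k X l \<omega> ** mart_diff f k X l \<omega>) ((4 * (\<alpha> l)\<^sup>2) *\<^sub>R mat 1))
      \<and> (\<forall>l\<in>{k+1..2*k}. psd_le (mart_diff f k X l \<omega> ** mart_diff f k X l \<omega>) ((4 * (\<alpha> k)\<^sup>2) *\<^sub>R mat 1))"
  proof (intro conjI ballI)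
    fix l assume l: "l \<in> {1..k}"
    have l2: "l \<le> 2 * k" using l by simp
    have ln: "l \<in> {1..n}" using l kn by simp
    define S where "S = {1..l - 1}"
    define z where "z = A0 \<inter> S"
    have S: "S \<subseteq> {1..n}" "z \<subseteq> S" "l \<in> {1..n}" "l \<notin> S" using ln by (auto simp: S_def z_def)
    have b2: "\<forall>j\<in>{1..n} - S. \<alpha> j \<le> \<alpha> l"
    proof
      fix j assume j: "j \<in> {1..n} - S"
      then have "l \<le> j" "j \<in> {1..n}" by (auto simp: S_def)
      then show "\<alpha> j \<le> \<alpha> l" using alpha_noninc ln by blast
    qed
    have beta: "\<alpha> l \<le> \<alpha> l" "\<forall>j\<in>{1..n} - S. \<alpha> j \<le> \<alpha> l" "0 \<le> \<alpha> l"
      using b2 alpha_nonneg ln by auto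
    have lS: "{1..l} = insert l S" using l by (auto simp: S_def)
    have mm: "min l k = l" "l - k = 0" "min (l - 1) k = l - 1" "l - 1 - k = 0" using l by auto
    have e1: "Ev l = {A. A \<inter> S = z} \<inter> {A. (l \<in> A) = (l \<in> A0)}"
    proof -
      have "Ev l = {A. A \<inter> insert l S = A0 \<inter> insert l S}" unfolding Ev_def mm lS by simp
      also have "\<dots> = {A. A \<inter> S = z} \<inter> {A. (l \<in> A) = (l \<in> A0)}"
        unfolding z_def using int_insert_eq[OF S(4)] by blast
      finally show ?thesis .
    qed
    have e0: "Ev (l - 1) = {A. A \<inter> S = z}"
      unfolding Ev_def mm z_def S_def by simp
    have "mbound (CE (Ev l) - CE (Ev (l - 1))) (2 * \<alpha> l)"
      unfolding e1 e0 CE_def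
      by (rule step_bound[OF f_lip X_range X_hom X_scp S beta A0X]) (simp add: z_def)
    then have "mbound (mart_diff f k X l \<omega>) (2 * \<alpha> l)" by (simp only: md[OF l2])
    then show "psd_le (mart_diff f k X l \<omega> ** mart_diff f k X l \<omega>) ((4 * (\<alpha> l)\<^sup>2) *\<^sub>R mat 1)"
      by (rule final[OF l2 _ beta(3)])
  next
    fix l assume l: "l \<in> {k+1..2*k}"
    have l2: "l \<le> 2 * k" using l by simp
    define r where "r = l - k"
    have r: "1 \<le> r" "r \<le> k" using l by (auto simp: r_def)
    have k1: "k \<in> {1..n}" using r kn by simp
    have ak: "0 \<le> \<alpha> k" using alpha_nonneg k1 by simp
    define t where "t = take (r - 1) ys0"
    define y where "y = ys0 ! (r - 1)"
    have rr: "r = Suc (r - 1)" using r by simp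
    have rl: "r - 1 < length ys0" using r len by simp
    have tr: "take r ys0 = t @ [y]"
      unfolding t_def y_def by (subst rr) (rule take_Suc_conv_app_nth[OF rl])
    have mk: "min l k = k" "min (l - 1) k = k" using l by auto
    have lk: "l - k = r" "l - 1 - k = r - 1" using l by (auto simp: r_def)
    define T where "T = set t - {0}"
    have Evl: "Ev l = {A. A \<inter> {1..k} = A0 \<inter> {1..k} \<and> insert y (set t) - {0} \<subseteq> A}"
      unfolding Ev_def mk lk tr by simp
    have Evl1: "Ev (l - 1) = {A. A \<inter> {1..k} = A0 \<inter> {1..k} \<and> T \<subseteq> A}"
      unfolding Ev_def mk lk T_def t_def by simp
    have "mbound (CE (Ev l) - CE (Ev (l - 1))) (2 * \<alpha> k)"
    proof (cases "y = 0 \<or> y \<in> T")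
      case True
      then have "insert y (set t) - {0} = T" by (auto simp: T_def)
      then have "Ev l = Ev (l - 1)" unfolding Evl Evl1 by simp
      then show ?thesis using ak by (simp add: mbound_zero)
    next
      case False
      then have y0: "y \<noteq> 0" "y \<notin> T" by auto
      have "take r ys0 \<in> set_pmf (Ys k A0 r)" using Ys_take[OF ys0 r(2)] .
      from Ys_supp[OF fA0 this] have supp: "\<forall>x\<in>set (t @ [y]). x = 0 \<or> (x \<in> A0 \<and> x \<notin> {1..k})"
        unfolding tr by blast
      have yA0: "y \<in> A0" "y \<notin> {1..k}" using supp y0 by auto
      have TA0: "T \<subseteq> A0" "T \<inter> {1..k} = {}" using supp by (auto simp: T_def)
      define S where "S = {1..k} \<union> T"
      define z where "z = (A0 \<inter> {1..k}) \<union> T"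
      have yn: "y \<in> {1..n}" using yA0 A0sub by auto
      have S: "S \<subseteq> {1..n}" "z \<subseteq> S" "y \<in> {1..n}" "y \<notin> S"
        using kn TA0 A0sub yn yA0 y0 by (auto simp: S_def z_def)
      have yk: "k \<le> y" using yA0 yn by auto
      have b1: "\<alpha> y \<le> \<alpha> k" using alpha_noninc k1 yn yk by blast
      have b2: "\<forall>j\<in>{1..n} - S. \<alpha> j \<le> \<alpha> k"
      proof
        fix j assume j: "j \<in> {1..n} - S"
        then have "k \<le> j" "j \<in> {1..n}" by (auto simp: S_def)
        then show "\<alpha> j \<le> \<alpha> k" using alpha_noninc k1 by blast
      qed
      note beta = b1 b2 ak
      have A0S: "A0 \<inter> S = z" using TA0 by (auto simp: S_def z_def)
      have e0: "Ev (l - 1) = {A. A \<inter> S = z}"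
        unfolding Evl1 S_def z_def using int_union_eq[OF TA0(2) TA0(1)] by blast
      have ins: "insert y (set t) - {0} = insert y T" using y0 by (auto simp: T_def)
      have "Ev l = {A. A \<inter> {1..k} = A0 \<inter> {1..k} \<and> T \<subseteq> A} \<inter> {A. y \<in> A}"
        unfolding Evl ins by blast
      also have "\<dots> = {A. A \<inter> S = z} \<inter> {A. (y \<in> A) = (y \<in> A0)}"
        unfolding Evl1[symmetric] e0 using yA0 by simp
      finally have e1: "Ev l = {A. A \<inter> S = z} \<inter> {A. (y \<in> A) = (y \<in> A0)}" .
      show ?thesis
        unfolding e1 e0 CE_def
        by (rule step_bound[OF f_lip X_range X_hom X_scp S beta A0X A0S])
    qed
    then have "mbound (mart_diff f k X l \<omega>) (2 * \<alpha> k)" by (simp only: md[OF l2])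
    then show "psd_le (mart_diff f k X l \<omega> ** mart_diff f k X l \<omega>) ((4 * (\<alpha> k)\<^sup>2) *\<^sub>R mat 1)"
      by (rule final[OF l2 _ ak])
  qed
qed


end
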